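(* Let $k\ge2$, $n\ge1$ be integers, let $\Xi:=\{\mathbf{z}\in\mathbb{R}^n_+:\mathbf{e}^T\mathbf{z}\ge1\}$ and define $\varphi(\mathbf{z}):=(\mathbf{e}^T\mathbf{z})^{-\frac{k-2}{k-1}}\mathbf{z}$ for $\mathbf{z}\in\Xi$. Then for all $\mathbf{a},\mathbf{b}\in\Xi$, $$\|\varphi(\mathbf{a})-\varphi(\mathbf{b})\|_1\le\frac{2k-3}{k-1}\|\mathbf{a}-\mathbf{b}\|_1.$$
   Context: $\mathbf{e}$ is the all-ones vector in $\mathbb{R}^n$. *)

theory Defs
  imports "HOL-Analysis.Analysis"
begin

definition ones :: "real ^ 'n" where
  "ones = (\<chi> i. 1)"

definition norm1 :: "real ^ 'n \<Rightarrow> real" where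
  "norm1 x = (\<Sum>i\<in>UNIV. \<bar>x $ i\<bar>)"

definition Xi :: "(real ^ 'n) set" where
  "Xi = {z. (\<forall>i. 0 \<le> z $ i) \<and> ones \<bullet> z \<ge> 1}"

definition phi :: "nat \<Rightarrow> real ^ 'n \<Rightarrow> real ^ 'n" where
  "phi k z = ((ones \<bullet> z) powr (- ((real k - 2) / (real k - 1)))) *\<^sub>R z"

end

theory Submission imports Defs begin

lemma key:
  fixes s t p :: real
  assumes "1 \<le> t" "t \<le> s" "0 \<le> p" "p \<le> 1"
  shows "t * (t powr (-p) - s powr (-p)) \<le> p * (s - t)"
proof -
  define x where "x = s / t"
  have tpos: "t > 0" using assms by simp
  have x1: "x \<ge> 1" using assms by (simp add: x_def)
  have sx: "s = t * x" using tpos by (simp add: x_def)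
  have "s powr (-p) = t powr (-p) * x powr (-p)" using sx tpos x1 by (simp add: powr_mult)
  moreover have "x powr (-p) \<ge> 1 - p * (x - 1)"
  proof -
    have "x powr (-p) = exp (-p * ln x)" using x1 by (simp add: powr_def)
    also have "\<dots> \<ge> 1 + (-p * ln x)" by (rule exp_ge_add_one_self)
    finally have "x powr (-p) \<ge> 1 - p * ln x" by simp
    moreover have "ln x \<le> x - 1" using x1 by (intro ln_le_minus_one) simp
    moreover have "p * ln x \<le> p * (x - 1)" using assms(3) \<open>ln x \<le> x - 1\<close> by (intro mult_left_mono)
    ultimately show ?thesis by linarith
  qed
  ultimately have "t powr (-p) - s powr (-p) \<le> t powr (-p) * (p * (x - 1))"
  proof -
    assume h1: "s powr (-p) = t powr (-p) * x powr (-p)" and h2: "x powr (-p) \<ge> 1 - p * (x - 1)"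
    have "t powr (-p) * (1 - p * (x - 1)) \<le> t powr (-p) * x powr (-p)"
      using h2 by (intro mult_left_mono) auto
    thus ?thesis unfolding h1 by (simp add: algebra_simps)
  qed
  hence "t * (t powr (-p) - s powr (-p)) \<le> t * (t powr (-p) * (p * (x - 1)))"
    using tpos by (intro mult_left_mono) auto
  also have "\<dots> = t powr (-p) * (p * (t * x - t))" by (simp add: algebra_simps)
  finally have "t * (t powr (-p) - s powr (-p)) \<le> t powr (-p) * (p * (t * x - t))" .
  also have "\<dots> \<le> 1 * (p * (t * x - t))"
  proof (rule mult_right_mono)
    show "t powr (-p) \<le> 1" using powr_mono[of "-p" 0 t] assms by simp
    show "0 \<le> p * (t * x - t)" using assms sx by simp
  qed
  finally show ?thesis using sx by simp
qed

lemma norm1_add: "norm1 (x + y) \<le> norm1 x + norm1 y"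
  unfolding norm1_def by (simp add: sum.distrib[symmetric] sum_mono abs_triangle_ineq)

lemma norm1_scale: "norm1 (c *\<^sub>R x) = \<bar>c\<bar> * norm1 x"
  unfolding norm1_def by (simp add: abs_mult sum_distrib_left)

lemma norm1_minus: "norm1 (x - y) = norm1 (y - x)"
  unfolding norm1_def by (simp add: abs_minus_commute)

lemma ones_inner: "ones \<bullet> z = (\<Sum>i\<in>UNIV. z $ i)"
  unfolding ones_def inner_vec_def by simp

lemma diff_le_norm1: "ones \<bullet> a - ones \<bullet> b \<le> norm1 (a - b)"
proof -
  have "ones \<bullet> a - ones \<bullet> b = (\<Sum>i\<in>UNIV. (a - b) $ i)"
    by (simp add: ones_inner sum_subtractf)
  also have "\<dots> \<le> norm1 (a - b)" unfolding norm1_def by (intro sum_mono) simp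
  finally show ?thesis .
qed

lemma norm1_nonneg: "(\<forall>i. 0 \<le> z $ i) \<Longrightarrow> norm1 z = ones \<bullet> z"
  unfolding norm1_def ones_inner by simp

lemma main_ord:
  fixes a b :: "real ^ 'n"
  assumes "0 \<le> p" "p \<le> 1" "a \<in> Xi" "b \<in> Xi" "ones \<bullet> b \<le> ones \<bullet> a"
  shows "norm1 ((ones \<bullet> a) powr (-p) *\<^sub>R a - (ones \<bullet> b) powr (-p) *\<^sub>R b) \<le> (1 + p) * norm1 (a - b)"
proof -
  define s where "s = ones \<bullet> a"
  define t where "t = ones \<bullet> b"
  have t1: "1 \<le> t" "t \<le> s" using assms by (auto simp: Xi_def s_def t_def)
  have nb: "norm1 b = t" using assms by (simp add: Xi_def norm1_nonneg t_def)
  have eq: "s powr (-p) *\<^sub>R a - t powr (-p) *\<^sub>R b = s powr (-p) *\<^sub>R (a - b) + (s powr (-p) - t powr (-p)) *\<^sub>R b"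
    by (simp add: algebra_simps)
  have "norm1 (s powr (-p) *\<^sub>R a - t powr (-p) *\<^sub>R b) \<le> s powr (-p) * norm1 (a - b) + \<bar>s powr (-p) - t powr (-p)\<bar> * t"
    unfolding eq using norm1_add norm1_scale nb by (metis abs_of_nonneg powr_ge_zero)
  also have "s powr (-p) * norm1 (a - b) \<le> 1 * norm1 (a - b)"
    apply (rule mult_right_mono)
    using powr_mono[of "-p" 0 s] assms t1 apply simp
    unfolding norm1_def by (simp add: sum_nonneg)
  also have "\<bar>s powr (-p) - t powr (-p)\<bar> * t \<le> p * (s - t)"
  proof -
    have "s powr (-p) \<le> t powr (-p)" using t1 assms by (simp add: powr_mono2')
    thus ?thesis using key[OF t1 assms(1,2)] by (simp add: algebra_simps)
  qed
  also have "p * (s - t) \<le> p * norm1 (a - b)"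
    using diff_le_norm1[of a b] assms by (simp add: s_def t_def mult_left_mono)
  finally show ?thesis by (simp add: s_def t_def algebra_simps)
qed

theorem lemma3p9:
  fixes k :: nat and a b :: "real ^ 'n"
  assumes "k \<ge> 2" and "a \<in> Xi" and "b \<in> Xi"
  shows "norm1 (phi k a - phi k b) \<le> (2 * real k - 3) / (real k - 1) * norm1 (a - b)"
proof -
  define p where "p = (real k - 2) / (real k - 1)"
  have p: "0 \<le> p" "p \<le> 1" using assms(1) by (auto simp: p_def)
  have C: "(2 * real k - 3) / (real k - 1) = 1 + p"
    using assms(1) by (simp add: p_def field_simps)
  have ph: "phi k z = (ones \<bullet> z) powr (-p) *\<^sub>R z" for z :: "real ^ 'n"
    by (simp add: phi_def p_def)
  show ?thesis
  proof (cases "ones \<bullet> b \<le> ones \<bullet> a")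
    case True
    thus ?thesis unfolding C ph using main_ord[OF p assms(2,3)] by simp
  next
    case False
    thus ?thesis unfolding C ph using main_ord[OF p assms(3,2)] norm1_minus
      by (metis linorder_le_cases)
  qed
qed

end
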